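(* Let $K$ be a flag simplicial complex, let $\succ$ be a hereditary ordering of $K$, and let $r$ be a positive integer. Suppose that for any two simplices $\sigma,\tau\in K$ with $\dim\sigma=\dim\tau=r$ and $\mu(\sigma)=\mu(\tau)$ we have $\sigma\cup\tau\in K$. Then $K$ collapses on a subcomplex of dimension less than $r$.
   Context: $K$ is a finite simplicial complex (family of subsets of a finite vertex set containing $\emptyset$, closed under subsets); $\dim\sigma=|\sigma|-1$. $K$ is flag if any set of vertices pairwise joined by edges of $K$ is a simplex of $K$. For a strict total ordering $\succ$ of $K$ and non-empty $\sigma$, $\mu(\sigma)$ is the $\succ$-largest facet (codimension-one face) of $\sigma$; $\succ$ is hereditary if $\sigma\succ\tau$ whenever $\dim\sigma>\dim\tau$, and $\sigma\succ\tau$ whenever $\mu(\sigma)\succ\mu(\tau)$. A pair of non-empty simplices $(\sigma,\tau)$ is a free pair if $\tau$ is a facet of $\sigma$ and $K\setminus\{\sigma,\tau\}$ is a simplicial complex; removing it is an elementary collapse; $K$ collapses on $L$ if $L$ is obtained by a finite sequence of elementary collapses. *)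

theory Defs
  imports Main
begin

definition simplicial_complex :: "'a set set \<Rightarrow> bool" where
  "simplicial_complex K \<longleftrightarrow> finite K \<and> (\<forall>\<sigma>\<in>K. finite \<sigma>) \<and> {} \<in> K \<and>
     (\<forall>\<sigma>\<in>K. \<forall>\<tau>. \<tau> \<subseteq> \<sigma> \<longrightarrow> \<tau> \<in> K)"

definition dim :: "'a set \<Rightarrow> int" where
  "dim \<sigma> = int (card \<sigma>) - 1"

definition flag_complex :: "'a set set \<Rightarrow> bool" where
  "flag_complex K \<longleftrightarrow> simplicial_complex K \<and>
     (\<forall>S. finite S \<longrightarrow> S \<subseteq> \<Union>K \<longrightarrow> (\<forall>v\<in>S. \<forall>w\<in>S. v \<noteq> w \<longrightarrow> {v, w} \<in> K) \<longrightarrow> S \<in> K)"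

definition facets :: "'a set \<Rightarrow> 'a set set" where
  "facets \<sigma> = {\<sigma> - {v} | v. v \<in> \<sigma>}"

text \<open>(a, b) in R means a is larger than b in the ordering. mu R sigma is the R-largest facet.\<close>
definition mu :: "('a set \<times> 'a set) set \<Rightarrow> 'a set \<Rightarrow> 'a set" where
  "mu R \<sigma> = (THE \<tau>. \<tau> \<in> facets \<sigma> \<and> (\<forall>\<tau>'\<in>facets \<sigma>. \<tau>' \<noteq> \<tau> \<longrightarrow> (\<tau>, \<tau>') \<in> R))"

definition strict_total_ordering :: "'a set set \<Rightarrow> ('a set \<times> 'a set) set \<Rightarrow> bool" where
  "strict_total_ordering K R \<longleftrightarrow> R \<subseteq> K \<times> K \<and> strict_linear_order_on K R"

definition hereditary_ordering :: "'a set set \<Rightarrow> ('a set \<times> 'a set) set \<Rightarrow> bool" where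
  "hereditary_ordering K R \<longleftrightarrow> strict_total_ordering K R \<and>
     (\<forall>\<sigma>\<in>K. \<forall>\<tau>\<in>K. dim \<sigma> > dim \<tau> \<longrightarrow> (\<sigma>, \<tau>) \<in> R) \<and>
     (\<forall>\<sigma>\<in>K. \<forall>\<tau>\<in>K. \<sigma> \<noteq> {} \<longrightarrow> \<tau> \<noteq> {} \<longrightarrow> (mu R \<sigma>, mu R \<tau>) \<in> R \<longrightarrow> (\<sigma>, \<tau>) \<in> R)"

definition free_pair :: "'a set set \<Rightarrow> 'a set \<Rightarrow> 'a set \<Rightarrow> bool" where
  "free_pair K \<sigma> \<tau> \<longleftrightarrow> \<sigma> \<in> K \<and> \<tau> \<in> K \<and> \<sigma> \<noteq> {} \<and> \<tau> \<noteq> {} \<and> \<tau> \<in> facets \<sigma> \<and>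
     simplicial_complex (K - {\<sigma>, \<tau>})"

definition elementary_collapse :: "'a set set \<Rightarrow> 'a set set \<Rightarrow> bool" where
  "elementary_collapse K L \<longleftrightarrow> (\<exists>\<sigma> \<tau>. free_pair K \<sigma> \<tau> \<and> L = K - {\<sigma>, \<tau>})"

definition collapses_on :: "'a set set \<Rightarrow> 'a set set \<Rightarrow> bool" where
  "collapses_on K L \<longleftrightarrow> elementary_collapse\<^sup>*\<^sup>* K L"

end

theory Submission
  imports Defs
begin

lemma collapse_lemma:
  fixes h :: "'a set \<times> 'a set \<Rightarrow> nat"
  assumes "finite M" and "simplicial_complex C" and "simplicial_complex L" and "L \<subseteq> C"
  and "\<forall>q\<in>M. snd q \<in> facets (fst q) \<and> snd q \<noteq> {}"
  and "C - L = (\<Union>q\<in>M. {fst q, snd q})"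
  and "\<forall>q\<in>M. \<forall>q'\<in>M. q \<noteq> q' \<longrightarrow> {fst q, snd q} \<inter> {fst q', snd q'} = {}"
  and "\<forall>q\<in>M. \<forall>\<gamma>\<in>C. snd q \<subset> \<gamma> \<longrightarrow> \<gamma> \<noteq> fst q \<longrightarrow> (\<exists>q'\<in>M. \<gamma> \<in> {fst q', snd q'} \<and> h q' > h q)"
  shows "collapses_on C L"
  using assms
proof (induction M arbitrary: C rule: finite_psubset_induct)
  case (psubset M)
  show ?case
  proof (cases "M = {}")
    case True
    then have "C - L = {}" using psubset.prems(5) by simp
    then have "C = L" using psubset.prems(3) by blast
    then show ?thesis unfolding collapses_on_def by simp
  next
    case False
    have "Max (h ` M) \<in> h ` M" using False psubset.hyps by simp
    then obtain p where p: "p \<in> M" "h p = Max (h ` M)" by auto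
    have pmax: "\<And>q. q \<in> M \<Longrightarrow> h q \<le> h p" using p psubset.hyps by simp
    obtain \<sigma> \<tau> where st: "p = (\<sigma>, \<tau>)" by fastforce
    have "snd p \<in> facets (fst p) \<and> snd p \<noteq> {}" using psubset.prems(4) p(1) by blast
    then have tf: "\<tau> \<in> facets \<sigma>" "\<tau> \<noteq> {}" using st by auto
    then have ts: "\<tau> \<subset> \<sigma>" unfolding facets_def by auto
    have "{fst p, snd p} \<subseteq> (\<Union>q\<in>M. {fst q, snd q})" using p(1) by blast
    then have "{\<sigma>, \<tau>} \<subseteq> C - L" using psubset.prems(5) st by simp
    then have inCL: "\<sigma> \<in> C - L" "\<tau> \<in> C - L" by auto
    have noco: "\<And>\<gamma>. \<gamma> \<in> C \<Longrightarrow> \<tau> \<subset> \<gamma> \<Longrightarrow> \<gamma> = \<sigma>"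
    proof (rule ccontr)
      fix \<gamma> assume g: "\<gamma> \<in> C" "\<tau> \<subset> \<gamma>" "\<gamma> \<noteq> \<sigma>"
      have "snd p \<subset> \<gamma>" "\<gamma> \<noteq> fst p" using g st by auto
      then have "\<exists>q'\<in>M. \<gamma> \<in> {fst q', snd q'} \<and> h q' > h p" using psubset.prems(7) p(1) g(1) by blast
      then obtain q' where "q' \<in> M" "h q' > h p" by blast
      then show False using pmax by (meson not_le)
    qed
    define C' where "C' = C - {\<sigma>, \<tau>}"
    have scC: "finite C" "\<forall>s\<in>C. finite s" "{} \<in> C" "\<forall>s\<in>C. \<forall>t. t \<subseteq> s \<longrightarrow> t \<in> C"
      using psubset.prems(1) unfolding simplicial_complex_def by auto
    have eL: "{} \<in> L" using psubset.prems(2) unfolding simplicial_complex_def by auto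
    have scC': "simplicial_complex C'"
      unfolding simplicial_complex_def
    proof (intro conjI ballI allI impI)
      show "finite C'" using scC C'_def by simp
    next
      fix s assume "s \<in> C'" then show "finite s" using scC C'_def by simp
    next
      show "{} \<in> C'" using scC eL inCL C'_def by auto
    next
      fix s t assume s: "s \<in> C'" "t \<subseteq> s"
      then have tC: "t \<in> C" using scC C'_def by auto
      have sC: "s \<in> C" "s \<noteq> \<sigma>" "s \<noteq> \<tau>" using s C'_def by auto
      have "t \<noteq> \<sigma>"
      proof
        assume "t = \<sigma>"
        then have "\<tau> \<subset> s" using ts s by auto
        then show False using noco sC by blast
      qed
      moreover have "t \<noteq> \<tau>"
      proof
        assume "t = \<tau>"
        then have "\<tau> \<subset> s" using s sC by auto
        then show False using noco sC by blast
      qed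
      ultimately show "t \<in> C'" using tC C'_def by auto
    qed
    have fp: "free_pair C \<sigma> \<tau>" unfolding free_pair_def C'_def[symmetric]
      using inCL tf ts scC' by auto
    have ec: "elementary_collapse C C'" unfolding elementary_collapse_def using fp C'_def by auto
    define M' where "M' = M - {p}"
    have sub: "M' \<subset> M" using p M'_def by auto
    have disj: "\<And>q. q \<in> M' \<Longrightarrow> {fst q, snd q} \<inter> {\<sigma>, \<tau>} = {}"
    proof -
      fix q assume "q \<in> M'"
      then have "q \<in> M" "q \<noteq> p" using M'_def by auto
      then have "{fst q, snd q} \<inter> {fst p, snd p} = {}" using psubset.prems(6) p(1) by blast
      then show "{fst q, snd q} \<inter> {\<sigma>, \<tau>} = {}" using st by simp
    qed
    have "collapses_on C' L"
    proof (rule psubset.IH[OF sub scC' psubset.prems(2)])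
      show "L \<subseteq> C'" using psubset.prems(3) inCL C'_def by auto
    next
      show "\<forall>q\<in>M'. snd q \<in> facets (fst q) \<and> snd q \<noteq> {}" using psubset.prems(4) M'_def by auto
    next
      show "C' - L = (\<Union>q\<in>M'. {fst q, snd q})"
      proof
        show "C' - L \<subseteq> (\<Union>q\<in>M'. {fst q, snd q})"
        proof
          fix a assume a: "a \<in> C' - L"
          then have "a \<in> C - L" "a \<noteq> \<sigma>" "a \<noteq> \<tau>" using C'_def by auto
          then obtain q where "q \<in> M" "a \<in> {fst q, snd q}" using psubset.prems(5) by blast
          moreover have "q \<noteq> p" using calculation \<open>a \<noteq> \<sigma>\<close> \<open>a \<noteq> \<tau>\<close> st by auto
          ultimately show "a \<in> (\<Union>q\<in>M'. {fst q, snd q})" using M'_def by blast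
        qed
      next
        show "(\<Union>q\<in>M'. {fst q, snd q}) \<subseteq> C' - L"
        proof
          fix a assume "a \<in> (\<Union>q\<in>M'. {fst q, snd q})"
          then obtain q where q: "q \<in> M'" "a \<in> {fst q, snd q}" by blast
          then have "a \<in> C - L" using psubset.prems(5) M'_def by blast
          moreover have "a \<notin> {\<sigma>, \<tau>}" using disj[OF q(1)] q(2) by blast
          ultimately show "a \<in> C' - L" using C'_def by auto
        qed
      qed
    next
      show "\<forall>q\<in>M'. \<forall>q'\<in>M'. q \<noteq> q' \<longrightarrow> {fst q, snd q} \<inter> {fst q', snd q'} = {}"
        using psubset.prems(6) M'_def by auto
    next
      show "\<forall>q\<in>M'. \<forall>\<gamma>\<in>C'. snd q \<subset> \<gamma> \<longrightarrow> \<gamma> \<noteq> fst q \<longrightarrow> (\<exists>q'\<in>M'. \<gamma> \<in> {fst q', snd q'} \<and> h q' > h q)"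
      proof (intro ballI impI)
        fix q \<gamma> assume q: "q \<in> M'" "\<gamma> \<in> C'" "snd q \<subset> \<gamma>" "\<gamma> \<noteq> fst q"
        have "q \<in> M" "\<gamma> \<in> C" using q M'_def C'_def by auto
        then have "\<exists>q'\<in>M. \<gamma> \<in> {fst q', snd q'} \<and> h q' > h q" using psubset.prems(7) q(3,4) by blast
        then obtain q' where q': "q' \<in> M" "\<gamma> \<in> {fst q', snd q'}" "h q' > h q" by blast
        have "q' \<noteq> p" using q' q(2) st C'_def by auto
        then show "\<exists>q'\<in>M'. \<gamma> \<in> {fst q', snd q'} \<and> h q' > h q" using q' M'_def by blast
      qed
    qed
    then show ?thesis using ec unfolding collapses_on_def
      by (simp add: converse_rtranclp_into_rtranclp)
  qed
qed

locale hc =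
  fixes K :: "'a set set" and R :: "('a set \<times> 'a set) set"
  assumes sc: "simplicial_complex K" and ord: "strict_total_ordering K R"
begin

lemma RK: "(a,b) \<in> R \<Longrightarrow> a \<in> K \<and> b \<in> K"
  using ord unfolding strict_total_ordering_def by auto

lemma irr: "(a,a) \<notin> R"
  using ord unfolding strict_total_ordering_def strict_linear_order_on_def irrefl_on_def by auto

lemma trR: "(a,b) \<in> R \<Longrightarrow> (b,c) \<in> R \<Longrightarrow> (a,c) \<in> R"
  using ord unfolding strict_total_ordering_def strict_linear_order_on_def trans_def by meson

lemma asy: "(a,b) \<in> R \<Longrightarrow> (b,a) \<notin> R"
  using trR irr by blast

lemma tot: "a \<in> K \<Longrightarrow> b \<in> K \<Longrightarrow> a \<noteq> b \<Longrightarrow> (a,b) \<in> R \<or> (b,a) \<in> R"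
  using ord unfolding strict_total_ordering_def strict_linear_order_on_def total_on_def by blast

lemma down: "\<sigma> \<in> K \<Longrightarrow> \<tau> \<subseteq> \<sigma> \<Longrightarrow> \<tau> \<in> K"
  using sc unfolding simplicial_complex_def by blast

lemma fin: "\<sigma> \<in> K \<Longrightarrow> finite \<sigma>"
  using sc unfolding simplicial_complex_def by blast

lemma finK: "finite K"
  using sc unfolding simplicial_complex_def by blast

lemma finU: "finite (\<Union>K)"
  using finK fin by blast

lemma exmax: "finite S \<Longrightarrow> S \<noteq> {} \<Longrightarrow> S \<subseteq> K \<Longrightarrow> \<exists>m\<in>S. \<forall>x\<in>S. x \<noteq> m \<longrightarrow> (m,x) \<in> R"
proof (induction S rule: finite_ne_induct)
  case (singleton x)
  then show ?case by auto
next
  case (insert x F)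
  then obtain m where m: "m \<in> F" "\<forall>y\<in>F. y \<noteq> m \<longrightarrow> (m,y) \<in> R" by auto
  show ?case
  proof (cases "(x,m) \<in> R")
    case True
    then show ?thesis using m trR by (metis insert_iff)
  next
    case False
    have "m \<in> K" "x \<in> K" using m insert.prems by auto
    then have "x = m \<or> (m,x) \<in> R" using tot[of x m] False by blast
    then show ?thesis using m insert.hyps by auto
  qed
qed

lemma facets_alt: "facets \<sigma> = (\<lambda>v. \<sigma> - {v}) ` \<sigma>"
  unfolding facets_def by auto

lemma mu_prop: assumes "\<sigma> \<in> K" "\<sigma> \<noteq> {}"
  shows "mu R \<sigma> \<in> facets \<sigma> \<and> (\<forall>\<tau>'\<in>facets \<sigma>. \<tau>' \<noteq> mu R \<sigma> \<longrightarrow> (mu R \<sigma>, \<tau>') \<in> R)"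
proof -
  have "finite (facets \<sigma>)" using fin[OF assms(1)] by (simp add: facets_alt)
  moreover have "facets \<sigma> \<noteq> {}" using assms(2) by (simp add: facets_alt)
  moreover have "facets \<sigma> \<subseteq> K"
  proof
    fix x assume "x \<in> facets \<sigma>"
    then have "x \<subseteq> \<sigma>" unfolding facets_def by auto
    then show "x \<in> K" using down[OF assms(1)] by simp
  qed
  ultimately have "\<exists>m\<in>facets \<sigma>. \<forall>x\<in>facets \<sigma>. x \<noteq> m \<longrightarrow> (m,x) \<in> R"
    by (rule exmax)
  then obtain m where m: "m \<in> facets \<sigma>" "\<forall>x\<in>facets \<sigma>. x \<noteq> m \<longrightarrow> (m,x) \<in> R"
    by blast
  have "mu R \<sigma> = m" unfolding mu_def
  proof (rule the_equality)
    show "m \<in> facets \<sigma> \<and> (\<forall>\<tau>'\<in>facets \<sigma>. \<tau>' \<noteq> m \<longrightarrow> (m, \<tau>') \<in> R)" using m by auto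
  next
    fix t assume "t \<in> facets \<sigma> \<and> (\<forall>\<tau>'\<in>facets \<sigma>. \<tau>' \<noteq> t \<longrightarrow> (t, \<tau>') \<in> R)"
    then have t: "t \<in> facets \<sigma>" "\<forall>\<tau>'\<in>facets \<sigma>. \<tau>' \<noteq> t \<longrightarrow> (t, \<tau>') \<in> R" by auto
    show "t = m"
    proof (rule ccontr)
      assume "t \<noteq> m"
      then have "(t,m) \<in> R" "(m,t) \<in> R" using t m by auto
      then show False using asy by blast
    qed
  qed
  then show ?thesis using m by auto
qed

lemma mu_eq: assumes "\<sigma> \<in> K" "\<tau> \<in> facets \<sigma>" "\<forall>\<tau>'\<in>facets \<sigma>. \<tau>' \<noteq> \<tau> \<longrightarrow> (\<tau>,\<tau>') \<in> R"
  shows "mu R \<sigma> = \<tau>"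
proof -
  have "\<sigma> \<noteq> {}" using assms(2) unfolding facets_def by auto
  then have "mu R \<sigma> \<in> facets \<sigma>" "\<forall>\<tau>'\<in>facets \<sigma>. \<tau>' \<noteq> mu R \<sigma> \<longrightarrow> (mu R \<sigma>, \<tau>') \<in> R"
    using mu_prop[OF assms(1)] by auto
  show ?thesis
  proof (rule ccontr)
    assume "mu R \<sigma> \<noteq> \<tau>"
    then have "(mu R \<sigma>, \<tau>) \<in> R" "(\<tau>, mu R \<sigma>) \<in> R" using assms(2,3) \<open>mu R \<sigma> \<in> facets \<sigma>\<close>
      \<open>\<forall>\<tau>'\<in>facets \<sigma>. \<tau>' \<noteq> mu R \<sigma> \<longrightarrow> (mu R \<sigma>, \<tau>') \<in> R\<close> by auto
    then show False using asy by blast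
  qed
qed

lemma mu_ge: "\<sigma> \<in> K \<Longrightarrow> \<tau> \<in> facets \<sigma> \<Longrightarrow> mu R \<sigma> = \<tau> \<or> (mu R \<sigma>, \<tau>) \<in> R"
proof -
  assume a: "\<sigma> \<in> K" "\<tau> \<in> facets \<sigma>"
  then have "\<sigma> \<noteq> {}" unfolding facets_def by auto
  then show ?thesis using mu_prop[OF a(1)] a(2) by auto
qed

lemma mu_K: assumes "\<sigma> \<in> K" "\<sigma> \<noteq> {}" shows "mu R \<sigma> \<in> K \<and> mu R \<sigma> \<subseteq> \<sigma>"
proof -
  have "mu R \<sigma> \<in> facets \<sigma>" using mu_prop[OF assms] by auto
  then have "mu R \<sigma> \<subseteq> \<sigma>" unfolding facets_def by auto
  then show ?thesis using down[OF assms(1)] by auto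
qed

end

locale hh = hc +
  assumes her: "\<forall>\<sigma>\<in>K. \<forall>\<tau>\<in>K. \<sigma> \<noteq> {} \<longrightarrow> \<tau> \<noteq> {} \<longrightarrow> (mu R \<sigma>, mu R \<tau>) \<in> R \<longrightarrow> (\<sigma>, \<tau>) \<in> R"
begin

lemma herI: "\<sigma> \<in> K \<Longrightarrow> \<tau> \<in> K \<Longrightarrow> \<sigma> \<noteq> {} \<Longrightarrow> \<tau> \<noteq> {} \<Longrightarrow> (mu R \<sigma>, mu R \<tau>) \<in> R \<Longrightarrow> (\<sigma>, \<tau>) \<in> R"
  using her by blast

lemma mu_mono: assumes "\<sigma> \<in> K" "\<tau> \<in> K" "\<sigma> \<noteq> {}" "\<tau> \<noteq> {}" "(\<sigma>,\<tau>) \<in> R"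
  shows "mu R \<sigma> = mu R \<tau> \<or> (mu R \<sigma>, mu R \<tau>) \<in> R"
proof (rule ccontr)
  assume n: "\<not> ?thesis"
  have "mu R \<sigma> \<in> K" "mu R \<tau> \<in> K" using mu_K assms by auto
  then have "(mu R \<tau>, mu R \<sigma>) \<in> R" using tot n by blast
  then have "(\<tau>,\<sigma>) \<in> R" using herI assms by blast
  then show False using asy assms(5) by blast
qed

lemma maxface:
  "card \<rho> = k \<Longrightarrow> \<rho> \<union> B \<in> K \<Longrightarrow> (\<forall>u\<in>B. u \<notin> \<rho> \<longrightarrow> mu R (insert u \<rho>) = \<rho>) \<Longrightarrow>
   F \<subseteq> \<rho> \<union> B \<Longrightarrow> card F = k \<Longrightarrow> F \<noteq> \<rho> \<Longrightarrow> (\<rho>, F) \<in> R"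
proof (induction k arbitrary: \<rho> B F)
  case 0
  have "finite (\<rho> \<union> B)" using fin 0 by blast
  then have "finite \<rho>" "finite F" using 0(4) by (auto intro: finite_subset)
  then show ?case using 0 by auto
next
  case (Suc k)
  have finU: "finite (\<rho> \<union> B)" using fin Suc.prems by blast
  then have fr: "finite \<rho>" "finite F" using Suc.prems finite_subset by auto
  have rK: "\<rho> \<in> K" using down Suc.prems(2) by blast
  have rne: "\<rho> \<noteq> {}" using Suc.prems(1) by auto
  define \<rho>1 where "\<rho>1 = mu R \<rho>"
  have "\<rho>1 \<in> facets \<rho>" using mu_prop[OF rK rne] \<rho>1_def by auto
  then obtain x0 where x0: "x0 \<in> \<rho>" "\<rho>1 = \<rho> - {x0}" unfolding facets_def by auto
  have r1: "\<rho> = insert x0 \<rho>1" "x0 \<notin> \<rho>1" using x0 by auto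
  have cr1: "card \<rho>1 = k" using x0 Suc.prems(1) fr by auto
  have un: "\<rho>1 \<union> insert x0 B = \<rho> \<union> B" using r1 by auto
  have hyp: "\<forall>u\<in>insert x0 B. u \<notin> \<rho>1 \<longrightarrow> mu R (insert u \<rho>1) = \<rho>1"
  proof (intro ballI impI)
    fix u assume u: "u \<in> insert x0 B" "u \<notin> \<rho>1"
    show "mu R (insert u \<rho>1) = \<rho>1"
    proof (cases "u = x0")
      case True
      then show ?thesis using r1 \<rho>1_def by simp
    next
      case False
      then have uB: "u \<in> B" "u \<notin> \<rho>" using u r1 by auto
      then have muu: "mu R (insert u \<rho>) = \<rho>" using Suc.prems(3) by blast
      have iK: "insert u \<rho> \<in> K" using down Suc.prems(2) uB by blast
      have i1K: "insert u \<rho>1 \<in> K" using down Suc.prems(2) uB r1 by blast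
      show ?thesis
      proof (rule mu_eq[OF i1K])
        show "\<rho>1 \<in> facets (insert u \<rho>1)" unfolding facets_def using u by auto
      next
        show "\<forall>\<tau>'\<in>facets (insert u \<rho>1). \<tau>' \<noteq> \<rho>1 \<longrightarrow> (\<rho>1, \<tau>') \<in> R"
        proof (intro ballI impI)
          fix t assume t: "t \<in> facets (insert u \<rho>1)" "t \<noteq> \<rho>1"
          then obtain z where z: "z \<in> insert u \<rho>1" "t = insert u \<rho>1 - {z}" unfolding facets_def by auto
          have zu: "z \<noteq> u" using z t u by auto
          then have z1: "z \<in> \<rho>1" using z by auto
          have tt: "t = insert u (\<rho>1 - {z})" using z zu by auto
          define G where "G = insert u (\<rho> - {z})"
          have GF: "G \<in> facets (insert u \<rho>)" unfolding facets_def G_def using zu z1 r1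
            by (intro CollectI exI[of _ z]) auto
          have Gne: "G \<noteq> \<rho>" "G \<noteq> {}" using uB G_def by auto
          have GK: "G \<in> K" proof -
            have "G \<subseteq> insert u \<rho>" unfolding G_def by blast
            then show ?thesis by (rule down[OF iK])
          qed
          have rG: "(\<rho>, G) \<in> R" using mu_prop[OF iK] muu GF Gne by auto
          have m1: "\<rho>1 = mu R G \<or> (\<rho>1, mu R G) \<in> R"
            using mu_mono[OF rK GK rne Gne(2) rG] \<rho>1_def by simp
          have tG: "t \<in> facets G" unfolding facets_def G_def tt using zu z1 r1 False
            by (intro CollectI exI[of _ x0]) auto
          have m2: "mu R G = t \<or> (mu R G, t) \<in> R" using mu_ge[OF GK tG] .
          have "\<rho>1 \<noteq> t" using tt u by auto
          then show "(\<rho>1, t) \<in> R" using m1 m2 trR by blast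
        qed
      qed
    qed
  qed
  have IH: "\<And>F'. F' \<subseteq> \<rho> \<union> B \<Longrightarrow> card F' = k \<Longrightarrow> F' \<noteq> \<rho>1 \<Longrightarrow> (\<rho>1, F') \<in> R"
    using Suc.IH[OF cr1 _ hyp] un Suc.prems(2) by metis
  have FK: "F \<in> K" using down Suc.prems(2,4) by blast
  have Fne: "F \<noteq> {}" using Suc.prems(5) by auto
  have "mu R F \<in> facets F" using mu_prop[OF FK Fne] by auto
  then obtain y where y: "y \<in> F" "mu R F = F - {y}" unfolding facets_def by auto
  have cmF: "card (mu R F) = k" using y Suc.prems(5) fr by auto
  show ?case
  proof (cases "mu R F = \<rho>1")
    case False
    have "mu R F \<subseteq> \<rho> \<union> B" using y Suc.prems(4) by auto
    then have "(mu R \<rho>, mu R F) \<in> R" using IH cmF False \<rho>1_def by metis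
    then show ?thesis using herI[OF rK FK rne Fne] by blast
  next
    case True
    then have Fy: "F = insert y \<rho>1" "y \<notin> \<rho>1" using y by auto
    have "y \<noteq> x0" using Fy r1 Suc.prems(6) by auto
    then have yB: "y \<in> B" "y \<notin> \<rho>" using Fy r1 Suc.prems(4) y by auto
    then have muy: "mu R (insert y \<rho>) = \<rho>" using Suc.prems(3) by blast
    have iK: "insert y \<rho> \<in> K" using down Suc.prems(2) yB by blast
    have "F \<in> facets (insert y \<rho>)" unfolding facets_def using Fy r1 \<open>y \<noteq> x0\<close>
      by (intro CollectI exI[of _ x0]) auto
    then show ?thesis using mu_prop[OF iK] muy Suc.prems(6) by auto
  qed
qed

end

locale mn = hh +
  fixes r :: nat
  assumes flag: "flag_complex K" and rpos: "r > 0"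
    and cond: "\<forall>\<sigma>\<in>K. \<forall>\<tau>\<in>K. dim \<sigma> = int r \<longrightarrow> dim \<tau> = int r \<longrightarrow> mu R \<sigma> = mu R \<tau> \<longrightarrow> \<sigma> \<union> \<tau> \<in> K"
begin

definition ismx :: "'a set \<Rightarrow> 'a set \<Rightarrow> bool" where
  "ismx \<alpha> F \<longleftrightarrow> F \<subseteq> \<alpha> \<and> card F = r \<and> (\<forall>G. G \<subseteq> \<alpha> \<and> card G = r \<and> G \<noteq> F \<longrightarrow> (F,G) \<in> R)"

definition mx :: "'a set \<Rightarrow> 'a set" where
  "mx \<alpha> = (SOME F. ismx \<alpha> F)"

definition V :: "'a set \<Rightarrow> 'a set" where
  "V \<rho> = {u. u \<notin> \<rho> \<and> insert u \<rho> \<in> K \<and> mu R (insert u \<rho>) = \<rho>}"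

lemma ismx_ex: assumes "\<alpha> \<in> K" "card \<alpha> \<ge> r" shows "\<exists>F. ismx \<alpha> F"
proof -
  let ?S = "{F. F \<subseteq> \<alpha> \<and> card F = r}"
  have fa: "finite \<alpha>" using fin assms by blast
  have "finite ?S" using fa by (rule finite_subset[rotated, OF finite_Pow_iff[THEN iffD2]]) auto
  moreover have "?S \<noteq> {}" using obtain_subset_with_card_n[OF assms(2)] by blast
  moreover have "?S \<subseteq> K" using down assms(1) by blast
  ultimately obtain m where "m \<in> ?S" "\<forall>x\<in>?S. x \<noteq> m \<longrightarrow> (m,x) \<in> R" using exmax by meson
  then have "ismx \<alpha> m" unfolding ismx_def by auto
  then show ?thesis by blast
qed

lemma ismx_uniq: assumes "ismx \<alpha> F" "ismx \<alpha> F'" shows "F = F'"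
proof (rule ccontr)
  assume n: "F \<noteq> F'"
  have "(F,F') \<in> R" using assms n unfolding ismx_def by auto
  moreover have "(F',F) \<in> R" using assms n unfolding ismx_def by auto
  ultimately show False using asy by blast
qed

lemma mx: "\<alpha> \<in> K \<Longrightarrow> card \<alpha> \<ge> r \<Longrightarrow> ismx \<alpha> (mx \<alpha>)"
proof -
  assume a: "\<alpha> \<in> K" "card \<alpha> \<ge> r"
  obtain F where "ismx \<alpha> F" using ismx_ex[OF a] by blast
  then show "ismx \<alpha> (mx \<alpha>)" unfolding mx_def by (rule someI)
qed

lemma mx_eq: "ismx \<alpha> F \<Longrightarrow> mx \<alpha> = F"
proof -
  assume a: "ismx \<alpha> F"
  then have "ismx \<alpha> (mx \<alpha>)" unfolding mx_def by (rule someI)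
  then show "mx \<alpha> = F" using ismx_uniq a by blast
qed

lemma VU: "V \<rho> \<subseteq> \<Union>K"
  unfolding V_def by blast

lemma fullK: assumes "\<rho> \<in> K" "card \<rho> = r" shows "\<rho> \<union> V \<rho> \<in> K"
proof -
  have scK: "simplicial_complex K" and fl: "\<forall>S. finite S \<longrightarrow> S \<subseteq> \<Union>K \<longrightarrow> (\<forall>v\<in>S. \<forall>w\<in>S. v \<noteq> w \<longrightarrow> {v, w} \<in> K) \<longrightarrow> S \<in> K"
    using flag unfolding flag_complex_def by auto
  have f: "finite (\<rho> \<union> V \<rho>)" using fin assms(1) VU finU finite_subset by blast
  have s: "\<rho> \<union> V \<rho> \<subseteq> \<Union>K" using assms(1) VU by blast
  have fr: "finite \<rho>" using fin assms(1) by blast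
  have p: "\<forall>v\<in>\<rho> \<union> V \<rho>. \<forall>w\<in>\<rho> \<union> V \<rho>. v \<noteq> w \<longrightarrow> {v, w} \<in> K"
  proof (intro ballI impI)
    fix v w assume vw: "v \<in> \<rho> \<union> V \<rho>" "w \<in> \<rho> \<union> V \<rho>" "v \<noteq> w"
    show "{v,w} \<in> K"
    proof (cases "v \<in> \<rho>")
      case vr: True
      show ?thesis
      proof (cases "w \<in> \<rho>")
        case True then show ?thesis using down[OF assms(1)] vr by simp
      next
        case False
        then have "insert w \<rho> \<in> K" using vw unfolding V_def by auto
        then show ?thesis using down vr by (meson empty_subsetI insert_mono insert_subset)
      qed
    next
      case vn: False
      then have vV: "v \<in> V \<rho>" using vw by auto
      then have ivK: "insert v \<rho> \<in> K" unfolding V_def by auto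
      show ?thesis
      proof (cases "w \<in> \<rho>")
        case True then show ?thesis using down[OF ivK] by simp
      next
        case False
        then have wV: "w \<in> V \<rho>" using vw by auto
        then have iwK: "insert w \<rho> \<in> K" unfolding V_def by auto
        have d1: "dim (insert v \<rho>) = int r" unfolding dim_def using vn fr assms(2) by simp
        have d2: "dim (insert w \<rho>) = int r" unfolding dim_def using False fr assms(2) by simp
        have "mu R (insert v \<rho>) = mu R (insert w \<rho>)" using vV wV unfolding V_def by auto
        then have "insert v \<rho> \<union> insert w \<rho> \<in> K" using cond ivK iwK d1 d2 by blast
        then show ?thesis using down by (meson Un_upper1 Un_upper2 insertI1 insert_subset empty_subsetI subset_trans)
      qed
    qed
  qed
  show ?thesis using fl f s p by blast
qed

lemma clsmx: assumes "\<rho> \<in> K" "card \<rho> = r" "\<rho> \<subseteq> \<beta>" "\<beta> \<subseteq> \<rho> \<union> V \<rho>"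
  shows "mx \<beta> = \<rho>"
proof (rule mx_eq)
  have hyp: "\<forall>u\<in>V \<rho>. u \<notin> \<rho> \<longrightarrow> mu R (insert u \<rho>) = \<rho>" unfolding V_def by auto
  show "ismx \<beta> \<rho>" unfolding ismx_def
    using assms maxface[OF assms(2) fullK[OF assms(1,2)] hyp] by blast
qed

lemma inV: assumes "\<alpha> \<in> K" "card \<alpha> \<ge> r" shows "\<alpha> \<subseteq> mx \<alpha> \<union> V (mx \<alpha>)"
proof
  fix u assume u: "u \<in> \<alpha>"
  let ?\<rho> = "mx \<alpha>"
  have m: "ismx \<alpha> ?\<rho>" using mx assms by blast
  show "u \<in> ?\<rho> \<union> V ?\<rho>"
  proof (cases "u \<in> ?\<rho>")
    case False
    have sub: "insert u ?\<rho> \<subseteq> \<alpha>" using m u unfolding ismx_def by auto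
    then have iK: "insert u ?\<rho> \<in> K" using down assms(1) by blast
    have fr: "finite ?\<rho>" using fin[OF iK] by simp
    have "mu R (insert u ?\<rho>) = ?\<rho>"
    proof (rule mu_eq[OF iK])
      show "?\<rho> \<in> facets (insert u ?\<rho>)" unfolding facets_def using False
        by (intro CollectI exI[of _ u]) auto
    next
      show "\<forall>t\<in>facets (insert u ?\<rho>). t \<noteq> ?\<rho> \<longrightarrow> (?\<rho>, t) \<in> R"
      proof (intro ballI impI)
        fix t assume t: "t \<in> facets (insert u ?\<rho>)" "t \<noteq> ?\<rho>"
        then obtain z where z: "z \<in> insert u ?\<rho>" "t = insert u ?\<rho> - {z}" unfolding facets_def by auto
        have "t \<subseteq> \<alpha>" using z sub by auto
        moreover have "card t = r" using z fr False m unfolding ismx_def by auto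
        ultimately show "(?\<rho>, t) \<in> R" using m t(2) unfolding ismx_def by blast
      qed
    qed
    then show ?thesis using False iK unfolding V_def by auto
  qed auto
qed


definition v :: "'a set \<Rightarrow> 'a" where "v \<rho> = (SOME u. u \<in> V \<rho>)"
definition good :: "'a set \<Rightarrow> bool" where "good \<rho> \<longleftrightarrow> \<rho> \<in> K \<and> card \<rho> = r \<and> V \<rho> \<noteq> {}"
definition M :: "('a set \<times> 'a set) set" where
  "M = {(insert (v \<rho>) \<beta>, \<beta>) | \<rho> \<beta>. good \<rho> \<and> \<rho> \<subseteq> \<beta> \<and> \<beta> \<subseteq> \<rho> \<union> V \<rho> \<and> v \<rho> \<notin> \<beta>}"
definition E :: "'a set set" where "E = (\<Union>q\<in>M. {fst q, snd q})"
definition pos :: "'a set \<Rightarrow> nat" where "pos \<rho> = card {x \<in> K. (\<rho>,x) \<in> R}"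
definition hq :: "'a set \<times> 'a set \<Rightarrow> nat" where
  "hq q = pos (mx (snd q)) * (card (\<Union>K) + 1) + card (fst q)"
definition pr :: "'a set \<Rightarrow> 'a set \<times> 'a set" where
  "pr \<alpha> = (if v (mx \<alpha>) \<in> \<alpha> then (\<alpha>, \<alpha> - {v (mx \<alpha>)}) else (insert (v (mx \<alpha>)) \<alpha>, \<alpha>))"

lemma vV: "good \<rho> \<Longrightarrow> v \<rho> \<in> V \<rho> \<and> v \<rho> \<notin> \<rho>"
proof -
  assume "good \<rho>"
  then have "\<exists>u. u \<in> V \<rho>" unfolding good_def by blast
  then have "v \<rho> \<in> V \<rho>" unfolding v_def by (rule someI_ex)
  then show ?thesis unfolding V_def by blast
qed

lemma clsK: "good \<rho> \<Longrightarrow> \<beta> \<subseteq> \<rho> \<union> V \<rho> \<Longrightarrow> \<beta> \<in> K"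
  unfolding good_def using fullK down by blast

lemma M_cases: assumes "q \<in> M"
  obtains \<rho> \<beta> where "q = (insert (v \<rho>) \<beta>, \<beta>)" "good \<rho>" "\<rho> \<subseteq> \<beta>" "\<beta> \<subseteq> \<rho> \<union> V \<rho>" "v \<rho> \<notin> \<beta>"
  using assms unfolding M_def by blast

lemma M_mx: assumes "q \<in> M" "\<alpha> \<in> {fst q, snd q}"
  shows "good (mx \<alpha>) \<and> mx \<alpha> \<subseteq> \<alpha> \<and> \<alpha> \<subseteq> mx \<alpha> \<union> V (mx \<alpha>) \<and> q = pr \<alpha>"
proof -
  obtain \<rho> \<beta> where q: "q = (insert (v \<rho>) \<beta>, \<beta>)" "good \<rho>" "\<rho> \<subseteq> \<beta>" "\<beta> \<subseteq> \<rho> \<union> V \<rho>" "v \<rho> \<notin> \<beta>"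
    using M_cases[OF assms(1)] by blast
  have vr: "v \<rho> \<in> V \<rho>" using vV q(2) by blast
  have a: "\<rho> \<subseteq> \<alpha>" "\<alpha> \<subseteq> \<rho> \<union> V \<rho>" using assms(2) q vr by auto
  have g: "\<rho> \<in> K" "card \<rho> = r" using q(2) unfolding good_def by auto
  have m: "mx \<alpha> = \<rho>" using clsmx[OF g a] .
  have "q = pr \<alpha>"
  proof (cases "\<alpha> = \<beta>")
    case True then show ?thesis unfolding pr_def using m q by simp
  next
    case False
    then have "\<alpha> = insert (v \<rho>) \<beta>" using assms(2) q by auto
    then show ?thesis unfolding pr_def using m q by auto
  qed
  then show ?thesis using m a q(2) by simp
qed

lemma pr_M: assumes "good \<rho>" "\<rho> \<subseteq> \<alpha>" "\<alpha> \<subseteq> \<rho> \<union> V \<rho>"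
  shows "pr \<alpha> \<in> M \<and> \<alpha> \<in> {fst (pr \<alpha>), snd (pr \<alpha>)}"
proof -
  have g: "\<rho> \<in> K" "card \<rho> = r" using assms(1) unfolding good_def by auto
  have m: "mx \<alpha> = \<rho>" using clsmx[OF g assms(2,3)] .
  have vr: "v \<rho> \<in> V \<rho>" "v \<rho> \<notin> \<rho>" using vV assms(1) by auto
  show ?thesis
  proof (cases "v \<rho> \<in> \<alpha>")
    case True
    then have p: "pr \<alpha> = (insert (v \<rho>) (\<alpha> - {v \<rho>}), \<alpha> - {v \<rho>})" unfolding pr_def m by auto
    have "(insert (v \<rho>) (\<alpha> - {v \<rho>}), \<alpha> - {v \<rho>}) \<in> M" unfolding M_def
      using assms vr by blast
    then show ?thesis using p True by auto
  next
    case False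
    then have p: "pr \<alpha> = (insert (v \<rho>) \<alpha>, \<alpha>)" unfolding pr_def m by auto
    have "(insert (v \<rho>) \<alpha>, \<alpha>) \<in> M" unfolding M_def
      using assms vr False by blast
    then show ?thesis using p by auto
  qed
qed

lemma E_K: "E \<subseteq> K"
proof
  fix \<alpha> assume "\<alpha> \<in> E"
  then obtain q where "q \<in> M" "\<alpha> \<in> {fst q, snd q}" unfolding E_def by blast
  then have "good (mx \<alpha>)" "\<alpha> \<subseteq> mx \<alpha> \<union> V (mx \<alpha>)" using M_mx by blast+
  then show "\<alpha> \<in> K" using clsK by blast
qed

lemma E_card: assumes "\<alpha> \<in> E" shows "card \<alpha> \<ge> r" "card \<alpha> = r \<Longrightarrow> \<alpha> = mx \<alpha>"
proof -
  obtain q where "q \<in> M" "\<alpha> \<in> {fst q, snd q}" using assms unfolding E_def by blast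
  then have m: "good (mx \<alpha>)" "mx \<alpha> \<subseteq> \<alpha>" using M_mx by blast+
  have fa: "finite \<alpha>" using E_K assms fin by blast
  have cm: "card (mx \<alpha>) = r" using m unfolding good_def by auto
  show "card \<alpha> \<ge> r" using card_mono[OF fa m(2)] cm by simp
  show "card \<alpha> = r \<Longrightarrow> \<alpha> = mx \<alpha>" using card_subset_eq[OF fa m(2)] cm by simp
qed

lemma big_E: assumes "\<alpha> \<in> K" "card \<alpha> \<ge> Suc r" shows "\<alpha> \<in> E"
proof -
  have c: "card \<alpha> \<ge> r" using assms by simp
  have m: "ismx \<alpha> (mx \<alpha>)" using mx[OF assms(1) c] .
  have s: "\<alpha> \<subseteq> mx \<alpha> \<union> V (mx \<alpha>)" using inV[OF assms(1) c] .
  have sub: "mx \<alpha> \<subseteq> \<alpha>" "card (mx \<alpha>) = r" using m unfolding ismx_def by auto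
  have mK: "mx \<alpha> \<in> K" using down assms(1) sub by blast
  have "mx \<alpha> \<noteq> \<alpha>" using sub assms(2) by auto
  then obtain u where "u \<in> \<alpha>" "u \<notin> mx \<alpha>" using sub by blast
  then have "V (mx \<alpha>) \<noteq> {}" using s by auto
  then have g: "good (mx \<alpha>)" unfolding good_def using mK sub by auto
  have "pr \<alpha> \<in> M \<and> \<alpha> \<in> {fst (pr \<alpha>), snd (pr \<alpha>)}" using pr_M[OF g sub(1) s] .
  then show ?thesis unfolding E_def by blast
qed

lemma pos_mono: assumes "(a,b) \<in> R" shows "pos b < pos a"
proof -
  have "{x \<in> K. (b,x) \<in> R} \<subset> {x \<in> K. (a,x) \<in> R}"
  proof
    show "{x \<in> K. (b,x) \<in> R} \<subseteq> {x \<in> K. (a,x) \<in> R}" using assms trR by blast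
    have "b \<in> {x \<in> K. (a,x) \<in> R}" "b \<notin> {x \<in> K. (b,x) \<in> R}" using assms RK irr by auto
    then show "{x \<in> K. (b,x) \<in> R} \<noteq> {x \<in> K. (a,x) \<in> R}" by blast
  qed
  moreover have "finite {x \<in> K. (a,x) \<in> R}" using finK by simp
  ultimately show ?thesis unfolding pos_def by (rule psubset_card_mono[rotated])
qed

lemma result: "\<exists>L. collapses_on K L \<and> simplicial_complex L \<and> L \<subseteq> K \<and> (\<forall>\<sigma>\<in>L. dim \<sigma> < int r)"
proof -
  define L where "L = K - E"
  have scK: "simplicial_complex K" using sc .
  have LK: "L \<subseteq> K" using L_def by auto
  have Lsmall: "\<And>\<alpha>. \<alpha> \<in> L \<Longrightarrow> card \<alpha> \<le> r"
  proof -
    fix \<alpha> assume "\<alpha> \<in> L"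
    then have "\<alpha> \<in> K" "\<alpha> \<notin> E" using L_def by auto
    then show "card \<alpha> \<le> r" using big_E by (meson not_less_eq_eq)
  qed
  have scL: "simplicial_complex L"
    unfolding simplicial_complex_def
  proof (intro conjI ballI allI impI)
    show "finite L" using finK L_def by simp
  next
    fix s assume "s \<in> L" then show "finite s" using fin L_def by simp
  next
    have "{} \<in> K" using sc unfolding simplicial_complex_def by simp
    moreover have "{} \<notin> E" using E_card(1)[of "{}"] rpos by auto
    ultimately show "{} \<in> L" using L_def by simp
  next
    fix s t assume st: "s \<in> L" "t \<subseteq> s"
    have sK: "s \<in> K" using st L_def by simp
    then have tK: "t \<in> K" using down st by blast
    have "t \<notin> E"
    proof
      assume tE: "t \<in> E"
      have "card t \<ge> r" using E_card(1)[OF tE] .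
      moreover have "card t \<le> card s" using card_mono[OF fin[OF sK] st(2)] .
      moreover have "card s \<le> r" using Lsmall st(1) .
      ultimately have "t = s" using card_subset_eq[OF fin[OF sK] st(2)] by simp
      then show False using tE st(1) L_def by simp
    qed
    then show "t \<in> L" using tK L_def by simp
  qed
  have dimL: "\<forall>\<sigma>\<in>L. dim \<sigma> < int r"
  proof
    fix \<sigma> assume "\<sigma> \<in> L"
    then have "card \<sigma> \<le> r" using Lsmall by blast
    then show "dim \<sigma> < int r" unfolding dim_def by simp
  qed
  have finM: "finite M"
  proof (rule finite_subset)
    show "M \<subseteq> K \<times> K" using E_K unfolding E_def by force
    show "finite (K \<times> K)" using finK by simp
  qed
  have "collapses_on K L"
  proof (rule collapse_lemma[OF finM scK scL LK, where h = hq])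
    show "\<forall>q\<in>M. snd q \<in> facets (fst q) \<and> snd q \<noteq> {}"
    proof
      fix q assume q: "q \<in> M"
      then obtain \<rho> \<beta> where qq: "q = (insert (v \<rho>) \<beta>, \<beta>)" "good \<rho>" "\<rho> \<subseteq> \<beta>" "\<beta> \<subseteq> \<rho> \<union> V \<rho>" "v \<rho> \<notin> \<beta>"
        by (rule M_cases)
      have "\<rho> \<noteq> {}" using qq(2) rpos unfolding good_def by auto
      then have "\<beta> \<noteq> {}" using qq(3) by blast
      moreover have "\<beta> \<in> facets (insert (v \<rho>) \<beta>)" unfolding facets_def using qq(5)
        by (intro CollectI exI[of _ "v \<rho>"]) auto
      ultimately show "snd q \<in> facets (fst q) \<and> snd q \<noteq> {}" using qq(1) by simp
    qed
  next
    show "K - L = (\<Union>q\<in>M. {fst q, snd q})" using E_K L_def unfolding E_def by blast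
  next
    show "\<forall>q\<in>M. \<forall>q'\<in>M. q \<noteq> q' \<longrightarrow> {fst q, snd q} \<inter> {fst q', snd q'} = {}"
    proof (intro ballI impI)
      fix q q' assume q: "q \<in> M" "q' \<in> M" "q \<noteq> q'"
      show "{fst q, snd q} \<inter> {fst q', snd q'} = {}"
      proof (rule ccontr)
        assume "{fst q, snd q} \<inter> {fst q', snd q'} \<noteq> {}"
        then obtain \<alpha> where a: "\<alpha> \<in> {fst q, snd q}" "\<alpha> \<in> {fst q', snd q'}" by blast
        have "q = pr \<alpha>" using M_mx[OF q(1) a(1)] by blast
        moreover have "q' = pr \<alpha>" using M_mx[OF q(2) a(2)] by blast
        ultimately show False using q(3) by simp
      qed
    qed
  next
    show "\<forall>q\<in>M. \<forall>\<gamma>\<in>K. snd q \<subset> \<gamma> \<longrightarrow> \<gamma> \<noteq> fst q \<longrightarrow> (\<exists>q'\<in>M. \<gamma> \<in> {fst q', snd q'} \<and> hq q' > hq q)"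
    proof (intro ballI impI)
      fix q \<gamma> assume q: "q \<in> M" "\<gamma> \<in> K" "snd q \<subset> \<gamma>" "\<gamma> \<noteq> fst q"
      obtain \<rho> \<beta> where qq: "q = (insert (v \<rho>) \<beta>, \<beta>)" "good \<rho>" "\<rho> \<subseteq> \<beta>" "\<beta> \<subseteq> \<rho> \<union> V \<rho>" "v \<rho> \<notin> \<beta>"
        using M_cases[OF q(1)] by blast
      have g: "\<rho> \<in> K" "card \<rho> = r" using qq(2) unfolding good_def by auto
      have mb: "mx \<beta> = \<rho>" using clsmx[OF g qq(3,4)] .
      have fg: "finite \<gamma>" using fin q(2) by blast
      have bg: "\<beta> \<subset> \<gamma>" using q(3) qq(1) by simp
      have cbg: "card \<beta> < card \<gamma>" using psubset_card_mono[OF fg bg] .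
      have cb: "card \<beta> \<ge> r" using card_mono[OF finite_subset[OF _ fg] qq(3)] bg g(2) by auto
      have gE: "\<gamma> \<in> E" using big_E[OF q(2)] cbg cb by simp
      then obtain q' where q': "q' \<in> M" "\<gamma> \<in> {fst q', snd q'}" unfolding E_def by blast
      have mm: "good (mx \<gamma>)" "q' = pr \<gamma>" using M_mx[OF q'] by blast+
      have pr_snd: "snd q' \<in> {fst q', snd q'}" by simp
      have mm2: "q' = pr (snd q')" "mx (snd q') \<subseteq> snd q'" "snd q' \<subseteq> mx (snd q') \<union> V (mx (snd q'))" "good (mx (snd q'))"
        using M_mx[OF q'(1) pr_snd] by blast+
      have "mx (snd q') = mx \<gamma>"
      proof -
        obtain \<rho>' \<beta>' where qq': "q' = (insert (v \<rho>') \<beta>', \<beta>')" "good \<rho>'" "\<rho>' \<subseteq> \<beta>'" "\<beta>' \<subseteq> \<rho>' \<union> V \<rho>'" "v \<rho>' \<notin> \<beta>'"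
          using M_cases[OF q'(1)] by blast
        have g': "\<rho>' \<in> K" "card \<rho>' = r" using qq'(2) unfolding good_def by auto
        have vr': "v \<rho>' \<in> V \<rho>'" using vV qq'(2) by blast
        have "mx \<beta>' = \<rho>'" using clsmx[OF g' qq'(3,4)] .
        moreover have "mx \<gamma> = \<rho>'"
        proof -
          have "\<rho>' \<subseteq> \<gamma>" "\<gamma> \<subseteq> \<rho>' \<union> V \<rho>'" using q'(2) qq' vr' by auto
          then show ?thesis by (rule clsmx[OF g'])
        qed
        ultimately show ?thesis using qq'(1) by simp
      qed
      have cg: "card \<gamma> \<ge> r" using cbg cb by simp
      have mg: "ismx \<gamma> (mx \<gamma>)" using mx[OF q(2) cg] .
      have rg: "\<rho> \<subseteq> \<gamma>" using qq(3) bg by blast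
      have cases: "mx \<gamma> = \<rho> \<or> (mx \<gamma>, \<rho>) \<in> R" using mg rg g(2) unfolding ismx_def by blast
      have N: "card (fst q) < card (\<Union>K) + 1"
      proof -
        have "fst q \<in> E" using q(1) unfolding E_def by blast
        then have "fst q \<in> K" using E_K by blast
        then have "fst q \<subseteq> \<Union>K" by blast
        then have "card (fst q) \<le> card (\<Union>K)" by (rule card_mono[OF finU])
        then show ?thesis by simp
      qed
      have "hq q' > hq q"
      proof (cases "mx \<gamma> = \<rho>")
        case True
        have fb: "finite \<beta>" using bg fg by (meson finite_subset psubset_imp_subset)
        have cq: "card (fst q) = Suc (card \<beta>)" using qq(1,5) fb by simp
        have "card (fst q') > card (fst q)"
        proof (cases "v \<rho> \<in> \<gamma>")
          case True2: True
          then have f': "fst q' = \<gamma>" using mm(2) True unfolding pr_def by simp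
          have "insert (v \<rho>) \<beta> \<subseteq> \<gamma>" using True2 bg by blast
          moreover have "insert (v \<rho>) \<beta> \<noteq> \<gamma>" using q(4) qq(1) by simp
          ultimately have "insert (v \<rho>) \<beta> \<subset> \<gamma>" by blast
          then have "card (insert (v \<rho>) \<beta>) < card \<gamma>" using psubset_card_mono[OF fg] by blast
          then show ?thesis using f' qq(1) by simp
        next
          case False
          then have f': "fst q' = insert (v \<rho>) \<gamma>" using mm(2) True unfolding pr_def by simp
          have "card (fst q') = Suc (card \<gamma>)" using f' False fg by simp
          then show ?thesis using cq cbg by simp
        qed
        moreover have "mx (snd q') = mx (snd q)" using \<open>mx (snd q') = mx \<gamma>\<close> True mb qq(1) by simp
        ultimately show ?thesis unfolding hq_def by simp
      next
        case False
        then have "(mx \<gamma>, \<rho>) \<in> R" using cases by blast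
        then have pp: "pos \<rho> < pos (mx (snd q'))" using pos_mono \<open>mx (snd q') = mx \<gamma>\<close> by simp
        have ms: "mx (snd q) = \<rho>" using mb qq(1) by simp
        let ?N = "card (\<Union>K) + 1"
        have "(pos \<rho> + 1) * ?N \<le> pos (mx (snd q')) * ?N" using pp by (intro mult_le_mono1) simp
        then have "pos \<rho> * ?N + card (fst q) < pos (mx (snd q')) * ?N" using N by simp
        then show ?thesis unfolding hq_def ms by simp
      qed
      then show "\<exists>q'\<in>M. \<gamma> \<in> {fst q', snd q'} \<and> hq q' > hq q" using q' by blast
    qed
  qed
  then show ?thesis using scL LK dimL by blast
qed

end

theorem proposition1:
  fixes K :: "'a set set" and R :: "('a set \<times> 'a set) set" and r :: nat
  assumes "flag_complex K"
    and "hereditary_ordering K R"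
    and "r > 0"
    and "\<forall>\<sigma>\<in>K. \<forall>\<tau>\<in>K. dim \<sigma> = int r \<longrightarrow> dim \<tau> = int r \<longrightarrow> mu R \<sigma> = mu R \<tau> \<longrightarrow> \<sigma> \<union> \<tau> \<in> K"
  shows "\<exists>L. collapses_on K L \<and> simplicial_complex L \<and> L \<subseteq> K \<and> (\<forall>\<sigma>\<in>L. dim \<sigma> < int r)"
proof -
  have sK: "simplicial_complex K" using assms(1) unfolding flag_complex_def by blast
  have so: "strict_total_ordering K R" using assms(2) unfolding hereditary_ordering_def by blast
  have hr: "\<forall>\<sigma>\<in>K. \<forall>\<tau>\<in>K. \<sigma> \<noteq> {} \<longrightarrow> \<tau> \<noteq> {} \<longrightarrow> (mu R \<sigma>, mu R \<tau>) \<in> R \<longrightarrow> (\<sigma>, \<tau>) \<in> R"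
    using assms(2) unfolding hereditary_ordering_def by blast
  interpret mn K R r
  proof (unfold_locales)
    show "simplicial_complex K" by (rule sK)
    show "strict_total_ordering K R" by (rule so)
    show "\<forall>\<sigma>\<in>K. \<forall>\<tau>\<in>K. \<sigma> \<noteq> {} \<longrightarrow> \<tau> \<noteq> {} \<longrightarrow> (mu R \<sigma>, mu R \<tau>) \<in> R \<longrightarrow> (\<sigma>, \<tau>) \<in> R" by (rule hr)
    show "flag_complex K" by (rule assms(1))
    show "0 < r" by (rule assms(3))
    show "\<forall>\<sigma>\<in>K. \<forall>\<tau>\<in>K. dim \<sigma> = int r \<longrightarrow> dim \<tau> = int r \<longrightarrow> mu R \<sigma> = mu R \<tau> \<longrightarrow> \<sigma> \<union> \<tau> \<in> K" by (rule assms(4))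
  qed
  show ?thesis by (rule result)
qed

end
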